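(* Let $P(t)$ be an admissible Hilbert polynomial with Macaulay–Hartshorne partition $(e_0,e_1,\dots,e_d)$ and Gotzmann partition $(b_1,\dots,b_r)$. Then: (i) $[\nabla(P)](t)=\sum_{j=1}^r\binom{t+(b_j-1)-(j-1)}{b_j-1}=\sum_{i=0}^{d-1}\binom{t+i}{i+1}-\binom{t+i-e_{i+1}}{i+1}$; (ii) $\nabla\sigma^a\lambda(P)=P$ for all $a\in\mathbb{N}$; (iii) if $\deg P>0$ and $k\in\{1,\dots,r\}$ is the largest index with $b_k\ne0$, then $P-\lambda\nabla(P)=r-k$; if $\deg P=0$ then $\nabla(P)=0$; (iv) $[(\lambda\sigma-\sigma\lambda)(P)](t)=t-r$.
   Context: Binomial coefficients are polynomials: $\binom{t+a}{b}=\frac{(t+a)\cdots(t+a-b+1)}{b!}$ for $b\ge0$ and $0$ for $b<0$. An admissible Hilbert polynomial is the Hilbert polynomial of a nonempty closed subscheme of some projective space over an algebraically closed field; each has a unique Macaulay–Hartshorne expression $P(t)=\sum_{i=0}^d\binom{t+i}{i+1}-\binom{t+i-e_i}{i+1}$ with $e_0\ge\dots\ge e_d>0$ (Macaulay–Hartshorne partition $(e_0,\dots,e_d)$) and a unique Gotzmann expression $P(t)=\sum_{j=1}^r\binom{t+b_j-(j-1)}{b_j}$ with $b_1\ge\dots\ge b_r\ge0$ (Gotzmann partition $(b_1,\dots,b_r)$). Operators: $\nabla\colon\mathbb{Q}[t]\to\mathbb{Q}[t]$, $[\nabla(q)](t):=q(t)-q(t-1)$; $\sigma(q):=1+q$;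 and for admissible $P$, $\lambda(P)$ is the admissible polynomial with Gotzmann partition $(b_1+1,\dots,b_r+1)$, i.e. $\lambda(P)(t)=\sum_{j=1}^r\binom{t+b_j+1-(j-1)}{b_j+1}$ (Macaulay–Hartshorne partition $(e_0,e_0,e_1,\dots,e_d)$). For polynomials of degree $>0$, $\nabla(P)$ is again admissible by (i), so $\lambda\nabla(P)$ makes sense. *)

theory Defs
  imports "HOL-Computational_Algebra.Polynomial"
begin

definition pbinom :: "int \<Rightarrow> int \<Rightarrow> rat poly" where
  "pbinom a b = (if b < 0 then 0
     else smult (1 / fact (nat b)) (\<Prod>i<nat b. [:of_int a - of_nat i, 1:]))"

definition nabla :: "rat poly \<Rightarrow> rat poly" where
  "nabla q = q - pcompose q [:-1, 1:]"

definition sigma :: "rat poly \<Rightarrow> rat poly" where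
  "sigma q = 1 + q"

text \<open>Gotzmann expression for a (0-indexed) list bs = [b_1,...,b_r]:
  sum over j=1..r of binom(t + b_j - (j-1), b_j).\<close>
definition gotzmann_poly :: "nat list \<Rightarrow> rat poly" where
  "gotzmann_poly bs = (\<Sum>j<length bs. pbinom (int (bs ! j) - int j) (int (bs ! j)))"

definition is_gotzmann_partition :: "rat poly \<Rightarrow> nat list \<Rightarrow> bool" where
  "is_gotzmann_partition P bs \<longleftrightarrow> sorted_wrt (\<ge>) bs \<and> P = gotzmann_poly bs"

definition mh_poly :: "nat list \<Rightarrow> rat poly" where
  "mh_poly es = (\<Sum>i<length es. pbinom (int i) (int i + 1) - pbinom (int i - int (es ! i)) (int i + 1))"

definition is_mh_partition :: "rat poly \<Rightarrow> nat list \<Rightarrow> bool" where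
  "is_mh_partition P es \<longleftrightarrow> es \<noteq> [] \<and> sorted_wrt (\<ge>) es \<and> (\<forall>e\<in>set es. e > 0) \<and> P = mh_poly es"

text \<open>Admissible Hilbert polynomial (via Macaulay/Gotzmann: exactly the nonzero polynomials
  admitting a Gotzmann expression).\<close>
definition admissible :: "rat poly \<Rightarrow> bool" where
  "admissible P \<longleftrightarrow> (\<exists>bs. bs \<noteq> [] \<and> is_gotzmann_partition P bs)"

definition gotzmann_partition :: "rat poly \<Rightarrow> nat list" where
  "gotzmann_partition P = (THE bs. is_gotzmann_partition P bs)"

definition lambda_op :: "rat poly \<Rightarrow> rat poly" where
  "lambda_op P = gotzmann_poly (map Suc (gotzmann_partition P))"

end

theory Submission
  imports Defs
begin

lemma poly_pbinom: "poly (pbinom a b) x = (if b < 0 then 0 else (x + of_int a) gchoose nat b)"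
  by (simp add: pbinom_def poly_prod gbinomial_prod_rev atLeast0LessThan divide_inverse mult.commute algebra_simps)

lemma pbinom_0[simp]: "pbinom a 0 = 1"
  by (simp add: pbinom_def)

lemma pbinom_1: "pbinom a 1 = [:of_int a, 1:]"
  by (simp add: pbinom_def)

lemma nabla_pbinom: "nabla (pbinom a b) = pbinom (a - 1) (b - 1)"
proof -
  have "poly (nabla (pbinom a b)) x = poly (pbinom (a - 1) (b - 1)) x" for x
  proof (cases "b < 1")
    case True
    then show ?thesis
      by (cases "b = 0") (auto simp: nabla_def poly_pcompose poly_pbinom)
  next
    case False
    then obtain n where n: "nat b = Suc n" "nat (b - 1) = n"
      by (intro that[of "nat (b - 1)"]) auto
    have e: "x + of_int a = (x - 1 + of_int a) + 1" by simp
    show ?thesis using False n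
      apply (simp add: nabla_def poly_pcompose poly_pbinom)
      apply (subst e)
      apply (subst gbinomial_Suc_Suc)
      apply (simp add: algebra_simps)
      done
  qed
  then show ?thesis by (simp add: poly_eq_poly_eq_iff[symmetric] fun_eq_iff)
qed

lemma nabla_add: "nabla (p + q) = nabla p + nabla q"
  by (simp add: nabla_def pcompose_add)
lemma nabla_diff: "nabla (p - q) = nabla p - nabla q"
  by (simp add: nabla_def pcompose_diff)
lemma nabla_sum: "nabla (sum f A) = (\<Sum>i\<in>A. nabla (f i))"
  by (simp add: nabla_def pcompose_sum sum_subtractf)
lemma nabla_1[simp]: "nabla 1 = 0"
  by (simp add: nabla_def pcompose_1)
lemma nabla_0[simp]: "nabla 0 = 0"
  by (simp add: nabla_def)
lemma nabla_const: "degree p = 0 \<Longrightarrow> nabla p = 0"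
  by (metis degree_eq_zeroE diff_self nabla_def pcompose_const)


abbreviation G where "G \<equiv> gotzmann_poly"

lemma G_Nil[simp]: "G [] = 0" by (simp add: gotzmann_poly_def)

lemma G_snoc: "G (xs @ [b]) = G xs + pbinom (int b - int (length xs)) (int b)"
  unfolding gotzmann_poly_def by (simp add: nth_append)

lemma G_zeros: "G (xs @ replicate z 0) = G xs + of_nat z"
proof (induction z)
  case (Suc z)
  have "xs @ replicate (Suc z) 0 = (xs @ replicate z 0) @ [0]"
    by (simp add: replicate_append_same[symmetric])
  moreover have "G ((xs @ replicate z 0) @ [0]) = G (xs @ replicate z 0) + 1"
    by (simp only: G_snoc) simp
  ultimately show ?case using Suc by (simp add: algebra_simps)
qed simp

lemma nabla_G_pos: "(\<forall>b\<in>set ps. b > 0) \<Longrightarrow> nabla (G ps) = G (map (\<lambda>b. b - 1) ps)"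
proof (induction ps rule: rev_induct)
  case (snoc b xs)
  then have "int (b - 1) = int b - 1" by auto
  then show ?case using snoc by (simp add: G_snoc nabla_add nabla_pbinom algebra_simps)
qed simp

lemma nabla_of_nat[simp]: "nabla (of_nat z) = 0"
  by (induction z) (simp_all add: nabla_add)

lemma nabla_G_zeros: "nabla (G (xs @ replicate z 0)) = nabla (G xs)"
  by (simp add: G_zeros nabla_add)

lemma sorted_split:
  assumes "sorted_wrt (\<ge>) (bs::nat list)"
  shows "\<exists>ps z. bs = ps @ replicate z 0 \<and> (\<forall>b\<in>set ps. b > 0)"
  using assms
proof (induction bs)
  case Nil then show ?case by (intro exI[of _ "[]"] exI[of _ 0]) simp
next
  case (Cons b bs)
  then obtain ps z where ps: "bs = ps @ replicate z 0" "\<forall>b\<in>set ps. b > 0" by auto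
  show ?case
  proof (cases "b > 0")
    case True then show ?thesis using ps by (intro exI[of _ "b # ps"] exI[of _ z]) simp
  next
    case False
    then have "\<forall>x\<in>set bs. x = 0" using Cons.prems by auto
    then have "bs = replicate (length bs) 0" by (simp add: replicate_length_same)
    then show ?thesis using False by (intro exI[of _ "[]"] exI[of _ "Suc (length bs)"]) simp
  qed
qed

lemma sum_dec_less: "(\<forall>b\<in>set ps. b > 0) \<Longrightarrow> ps \<noteq> [] \<Longrightarrow> sum_list (map (\<lambda>b. b - 1) ps) < sum_list (ps::nat list)"
proof (induction ps)
  case (Cons a ps)
  then show ?case
    by (cases "ps = []") (auto simp: less_imp_le_nat add_le_less_mono)
qed simp

lemma sum_dec_le: "sum_list (map (\<lambda>b. b - 1) ps) \<le> sum_list (ps::nat list)"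
  by (induction ps) auto

lemma map_suc_dec: "(\<forall>b\<in>set ps. b > 0) \<Longrightarrow> map Suc (map (\<lambda>b. b - 1) ps) = ps"
  by (induction ps) auto

lemma G_unique_aux:
  "sum_list bs + sum_list cs = n \<Longrightarrow> sorted_wrt (\<ge>) bs \<Longrightarrow> sorted_wrt (\<ge>) cs \<Longrightarrow> G bs = G cs \<Longrightarrow> bs = cs"
proof (induction n arbitrary: bs cs rule: less_induct)
  case (less n)
  obtain ps z where ps: "bs = ps @ replicate z 0" "\<forall>b\<in>set ps. b > 0"
    using sorted_split[OF less.prems(2)] by blast
  obtain qs w where qs: "cs = qs @ replicate w 0" "\<forall>b\<in>set qs. b > 0"
    using sorted_split[OF less.prems(3)] by blast
  have pq: "ps = qs"
  proof (cases "ps = [] \<and> qs = []")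
    case True then show ?thesis by simp
  next
    case False
    have sb: "sum_list bs = sum_list ps" "sum_list cs = sum_list qs" using ps qs by simp_all
    have lt: "sum_list (map (\<lambda>b. b - 1) ps) + sum_list (map (\<lambda>b. b - 1) qs) < n"
      using False sum_dec_less[OF ps(2)] sum_dec_less[OF qs(2)] sum_dec_le[of ps] sum_dec_le[of qs]
        less.prems(1) sb by fastforce
    have s1: "sorted_wrt (\<ge>) (map (\<lambda>b. b - 1) ps)"
      using less.prems(2) ps(1) by (auto simp: sorted_wrt_map sorted_wrt_append intro: sorted_wrt_mono_rel[rotated])
    have s2: "sorted_wrt (\<ge>) (map (\<lambda>b. b - 1) qs)"
      using less.prems(3) qs(1) by (auto simp: sorted_wrt_map sorted_wrt_append intro: sorted_wrt_mono_rel[rotated])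
    have "nabla (G bs) = nabla (G cs)" using less.prems(4) by simp
    then have "G (map (\<lambda>b. b - 1) ps) = G (map (\<lambda>b. b - 1) qs)"
      using ps qs by (simp add: nabla_G_zeros nabla_G_pos)
    then have "map (\<lambda>b. b - 1) ps = map (\<lambda>b. b - 1) qs"
      using less.IH[OF lt refl s1 s2] by simp
    then show ?thesis using map_suc_dec[OF ps(2)] map_suc_dec[OF qs(2)] by metis
  qed
  have "G ps + of_nat z = G ps + of_nat w" using less.prems(4) ps qs pq by (simp add: G_zeros)
  then have "(of_nat z :: rat poly) = of_nat w" by simp
  then have "z = w" by (metis of_nat_eq_iff)
  then show ?case using ps qs pq by simp
qed

lemma gp_eq: "is_gotzmann_partition P bs \<Longrightarrow> gotzmann_partition P = bs"
  unfolding gotzmann_partition_def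
  by (rule the_equality) (auto simp: is_gotzmann_partition_def intro: G_unique_aux[OF refl])


lemma sigma_pow: "(sigma ^^ a) X = of_nat a + X"
  by (induction a) (simp_all add: sigma_def algebra_simps)

theorem lemma2p7:
  fixes P :: "rat poly" and es bs :: "nat list"
  assumes adm: "admissible P"
    and mh: "is_mh_partition P es"
    and gz: "is_gotzmann_partition P bs"
  shows "nabla P = (\<Sum>j<length bs. pbinom (int (bs ! j) - 1 - int j) (int (bs ! j) - 1))
         \<and> nabla P = (\<Sum>i<length es - 1.
              pbinom (int i) (int i + 1) - pbinom (int i - int (es ! (i + 1))) (int i + 1))
         \<and> (\<forall>a::nat. nabla ((sigma ^^ a) (lambda_op P)) = P)
         \<and> (\<forall>k. degree P > 0 \<longrightarrow> 1 \<le> k \<longrightarrow> k \<le> length bs \<longrightarrow> bs ! (k - 1) \<noteq> 0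
            \<longrightarrow> (\<forall>j. k < j \<and> j \<le> length bs \<longrightarrow> bs ! (j - 1) = 0)
            \<longrightarrow> P - lambda_op (nabla P) = of_nat (length bs - k))
         \<and> (degree P = 0 \<longrightarrow> nabla P = 0)
         \<and> lambda_op (sigma P) - sigma (lambda_op P) = [:- of_nat (length bs), 1:]"
proof (intro conjI allI impI)
  have P: "P = G bs" and sb: "sorted_wrt (\<ge>) bs" using gz by (auto simp: is_gotzmann_partition_def)
  have gpP: "gotzmann_partition P = bs" by (rule gp_eq[OF gz])
  show "nabla P = (\<Sum>j<length bs. pbinom (int (bs ! j) - 1 - int j) (int (bs ! j) - 1))"
    unfolding P gotzmann_poly_def nabla_sum nabla_pbinom by (simp add: algebra_simps)
  show "nabla P = (\<Sum>i<length es - 1.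
              pbinom (int i) (int i + 1) - pbinom (int i - int (es ! (i + 1))) (int i + 1))"
  proof -
    have Pm: "P = mh_poly es" and ne: "es \<noteq> []" using mh by (auto simp: is_mh_partition_def)
    obtain n where n: "length es = Suc n" using ne by (cases es) auto
    have "nabla P = (\<Sum>i<Suc n. pbinom (int i - 1) (int i) - pbinom (int i - int (es ! i) - 1) (int i))"
      unfolding Pm mh_poly_def nabla_sum nabla_diff nabla_pbinom n by simp
    also have "\<dots> = (\<Sum>i<n. pbinom (int i) (int i + 1) - pbinom (int i - int (es ! (i + 1))) (int i + 1))"
      by (subst sum.lessThan_Suc_shift) (simp add: algebra_simps)
    finally show ?thesis using n by simp
  qed
  show "nabla ((sigma ^^ a) (lambda_op P)) = P" for a
  proof -
    have "nabla ((sigma ^^ a) (lambda_op P)) = nabla (G (map Suc bs))"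
      by (simp add: sigma_pow nabla_add lambda_op_def gpP)
    also have "\<dots> = G bs" by (subst nabla_G_pos) (auto simp: comp_def)
    finally show ?thesis using P by simp
  qed
  show "degree P = 0 \<Longrightarrow> nabla P = 0" by (rule nabla_const)
  show "lambda_op (sigma P) - sigma (lambda_op P) = [:- of_nat (length bs), 1:]"
  proof -
    have s0: "sigma P = G (bs @ [0])" by (simp only: G_snoc) (simp add: P sigma_def)
    have "is_gotzmann_partition (sigma P) (bs @ [0])"
      using sb s0 by (simp add: is_gotzmann_partition_def sorted_wrt_append)
    then have "gotzmann_partition (sigma P) = bs @ [0]" by (rule gp_eq)
    then have "lambda_op (sigma P) = G (map Suc bs @ [1])" by (simp add: lambda_op_def)
    also have "\<dots> = G (map Suc bs) + [:1 - of_nat (length bs), 1:]"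
      by (simp only: G_snoc) (simp add: pbinom_1)
    finally show ?thesis by (simp add: lambda_op_def gpP sigma_def one_pCons)
  qed
  fix k
  assume dP: "degree P > 0" and k1: "1 \<le> k" and kl: "k \<le> length bs" and bk: "bs ! (k - 1) \<noteq> 0"
    and after: "\<forall>j. k < j \<and> j \<le> length bs \<longrightarrow> bs ! (j - 1) = 0"
  obtain ps z where ps: "bs = ps @ replicate z 0" "\<forall>b\<in>set ps. b > 0"
    using sorted_split[OF sb] by blast
  have lk: "length ps = k"
  proof (rule ccontr)
    assume "length ps \<noteq> k"
    then consider "length ps < k" | "length ps > k" by linarith
    then show False
    proof cases
      case 1
      then have "bs ! (k - 1) = 0" using ps kl k1 by (auto simp: nth_append)
      then show False using bk by simp
    next
      case 2
      then have "bs ! k > 0" using ps by (auto simp: nth_append)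
      moreover have "bs ! k = 0" using after[rule_format, of "Suc k"] 2 ps by auto
      ultimately show False by simp
    qed
  qed
  have z: "z = length bs - k" using ps lk by simp
  have nP: "nabla P = G (map (\<lambda>b. b - 1) ps)"
    using P ps by (simp add: nabla_G_zeros nabla_G_pos)
  have "sorted_wrt (\<ge>) (map (\<lambda>b. b - 1) ps)"
    using sb ps(1) by (auto simp: sorted_wrt_map sorted_wrt_append intro: sorted_wrt_mono_rel[rotated])
  then have "gotzmann_partition (nabla P) = map (\<lambda>b. b - 1) ps"
    by (intro gp_eq) (simp add: is_gotzmann_partition_def nP)
  then have "lambda_op (nabla P) = G (map Suc (map (\<lambda>b. b - 1) ps))" by (simp only: lambda_op_def)
  then have "lambda_op (nabla P) = G ps" by (simp only: map_suc_dec[OF ps(2)])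
  moreover have "P = G ps + of_nat z" using P ps(1) G_zeros by simp
  ultimately show "P - lambda_op (nabla P) = of_nat (length bs - k)"
    using z by simp
qed

end
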